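(* Let $K$ be a non-archimedean local field with $\mathrm{char}(K)\neq 2$, let $i=\sqrt{-1}$, and let $S$ be the set of all quadruples $(A,B,C,D)\in\mathrm{SL}_2(K(i))^4$ such that $A$ is diagonal and $ABA^{-1}B^{-1}CDC^{-1}D^{-1}=-I$. For every word $w$ in the free group $F_4$ of rank four, there exists $(A,B,C,D)\in S$ such that $\pi w(A,B,C,D)$ does not have order $2$.
   Context: For a word $w\in F_4$ and $(A,B,C,D)\in\mathrm{SL}_2(K(i))^4$, $w(A,B,C,D)$ is the evaluation of $w$ at $(A,B,C,D)$, and $\pi w(A,B,C,D)$ is its image in $\mathrm{PSL}_2(K(i))$ under the quotient map $\pi$. *)

theory Defs
  imports "HOL-Analysis.Analysis" "HOL-Library.Numeral_Type"
begin

text \<open>A non-archimedean local field: a field complete with respect to a (normalised)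
 discrete valuation v (defined on nonzero elements, surjective onto the integers),
 whose residue field is finite. The valuation v is only meaningful on nonzero
 elements; closeness "x = y or v(x - y) >= N" is used for the metric notions.\<close>

definition val_close :: "('k::field \<Rightarrow> int) \<Rightarrow> int \<Rightarrow> 'k \<Rightarrow> 'k \<Rightarrow> bool" where
  "val_close v N x y \<longleftrightarrow> x = y \<or> v (x - y) \<ge> N"

definition na_local_field :: "('k::field \<Rightarrow> int) \<Rightarrow> bool" where
  "na_local_field v \<longleftrightarrow>
     (\<forall>x y. x \<noteq> 0 \<longrightarrow> y \<noteq> 0 \<longrightarrow> v (x * y) = v x + v y)
   \<and> (\<forall>x y. x \<noteq> 0 \<longrightarrow> y \<noteq> 0 \<longrightarrow> x + y \<noteq> 0 \<longrightarrow> v (x + y) \<ge> min (v x) (v y))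
   \<and> (\<forall>n. \<exists>x. x \<noteq> 0 \<and> v x = n)
   \<and> (\<forall>s :: nat \<Rightarrow> 'k. (\<forall>N. \<exists>M. \<forall>m\<ge>M. \<forall>n\<ge>M. val_close v N (s m) (s n)) \<longrightarrow>
          (\<exists>l. \<forall>N. \<exists>M. \<forall>n\<ge>M. val_close v N (s n) l))
   \<and> (\<exists>F. finite F \<and> F \<subseteq> {x. x = 0 \<or> v x \<ge> 0} \<and>
          (\<forall>x. (x = 0 \<or> v x \<ge> 0) \<longrightarrow> (\<exists>y\<in>F. val_close v 1 x y)))"

definition is_K_adjoin_i :: "('k::field \<Rightarrow> 'l::field) \<Rightarrow> 'l \<Rightarrow> bool" where
  "is_K_adjoin_i emb i \<longleftrightarrow>
     emb 1 = 1 \<and> (\<forall>x y. emb (x + y) = emb x + emb y) \<and> (\<forall>x y. emb (x * y) = emb x * emb y)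
   \<and> i ^ 2 = - 1
   \<and> (\<forall>z. \<exists>a b. z = emb a + emb b * i)"

type_synonym 'a mat2 = "'a ^ 2 ^ 2"

definition SL2 :: "'a::field mat2 set" where
  "SL2 = {A. det A = 1}"

abbreviation minv :: "'a::field mat2 \<Rightarrow> 'a mat2" where
  "minv A \<equiv> matrix_inv A"

definition is_diagonal2 :: "'a::field mat2 \<Rightarrow> bool" where
  "is_diagonal2 A \<longleftrightarrow> A $ 1 $ 2 = 0 \<and> A $ 2 $ 1 = 0"

definition S_set :: "('a::field mat2 \<times> 'a mat2 \<times> 'a mat2 \<times> 'a mat2) set" where
  "S_set = {(A,B,C,D). A \<in> SL2 \<and> B \<in> SL2 \<and> C \<in> SL2 \<and> D \<in> SL2 \<and> is_diagonal2 A \<and>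
     A ** B ** minv A ** minv B ** C ** D ** minv C ** minv D = - mat 1}"

text \<open>Words in the free group F_4 on generators indexed by the type 4: a word is a
 list of letters (generator, exponent sign), True meaning exponent +1, False -1.
 Every element of F_4 is represented by such a word, and evaluation is well defined
 on F_4, so quantifying over all words is the same as quantifying over F_4.\<close>
type_synonym word4 = "(4 \<times> bool) list"

fun eval_word :: "word4 \<Rightarrow> (4 \<Rightarrow> 'a::field mat2) \<Rightarrow> 'a mat2" where
  "eval_word [] g = mat 1"
| "eval_word ((j, True) # w) g = g j ** eval_word w g"
| "eval_word ((j, False) # w) g = minv (g j) ** eval_word w g"

definition gens4 :: "'a mat2 \<Rightarrow> 'a mat2 \<Rightarrow> 'a mat2 \<Rightarrow> 'a mat2 \<Rightarrow> 4 \<Rightarrow> 'a mat2" where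
  "gens4 A B C D j = (if j = 0 then A else if j = 1 then B else if j = 2 then C else D)"

text \<open>The quotient map SL_2 -> PSL_2 = SL_2/{I,-I}: X is sent to its coset {X,-X}.
 Multiplication of cosets is induced by matrix multiplication.\<close>
definition psl_proj :: "'a::field mat2 \<Rightarrow> 'a mat2 set" where
  "psl_proj X = {X, - X}"

definition psl_order2 :: "'a::field mat2 \<Rightarrow> bool" where
  "psl_order2 X \<longleftrightarrow> psl_proj X \<noteq> psl_proj (mat 1) \<and> psl_proj (X ** X) = psl_proj (mat 1)"

end

theory Submission
  imports Defs
begin

definition mk :: "'a::field \<Rightarrow> 'a \<Rightarrow> 'a \<Rightarrow> 'a \<Rightarrow> 'a mat2" where
  "mk a b c d = (\<chi> r s. if r = 1 then (if s = 1 then a else b) else (if s = 1 then c else d))"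

lemma mk_nth[simp]: "mk a b c d $ 1 $ 1 = a" "mk a b c d $ 1 $ 2 = b"
  "mk a b c d $ 2 $ 1 = c" "mk a b c d $ 2 $ 2 = d"
  by (simp_all add: mk_def)

lemma mk_mult: "mk a b c d ** mk e f g h = mk (a*e+b*g) (a*f+b*h) (c*e+d*g) (c*f+d*h)"
  by (simp add: matrix_matrix_mult_def vec_eq_iff forall_2 sum_2 mk_def)

lemma mk_neg: "- mk a b c d = mk (-a) (-b) (-c) (-d)"
  by (simp add: vec_eq_iff forall_2 mk_def)

lemma mk_eq: "mk a b c d = mk a' b' c' d' \<longleftrightarrow> a = a' \<and> b = b' \<and> c = c' \<and> d = d'"
  by (auto simp add: vec_eq_iff forall_2 mk_def)

lemma mat1_mk: "(mat 1 :: 'a::field mat2) = mk 1 0 0 1"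
  by (simp add: vec_eq_iff forall_2 mk_def mat_def)

lemma minv_unique:
  fixes A B :: "'a::field mat2"
  assumes "A ** B = mat 1" "B ** A = mat 1"
  shows "matrix_inv A = B"
proof -
  have "\<exists>A'. A ** A' = mat 1 \<and> A' ** A = mat 1" using assms by blast
  then have h: "A ** matrix_inv A = mat 1 \<and> matrix_inv A ** A = mat 1"
    unfolding matrix_inv_def by (rule someI_ex)
  have "matrix_inv A = matrix_inv A ** (A ** B)" using assms by simp
  also have "\<dots> = (matrix_inv A ** A) ** B" by (simp add: matrix_mul_assoc)
  also have "\<dots> = B" using h by simp
  finally show ?thesis .
qed

definition qm :: "'a::field \<Rightarrow> bool \<Rightarrow> bool \<Rightarrow> 'a mat2" where
  "qm i x y = (if x then (if y then mk 0 i i 0 else mk i 0 0 (-i))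
               else (if y then mk 0 1 (-1) 0 else mk 1 0 0 1))"

lemma qm_mult:
  assumes "i * i = -1"
  shows "qm i x y ** qm i x' y' = qm i (x \<noteq> x') (y \<noteq> y') \<or>
         qm i x y ** qm i x' y' = - qm i (x \<noteq> x') (y \<noteq> y')"
  using assms by (cases x; cases y; cases x'; cases y') (simp_all add: qm_def mk_mult mk_neg mk_eq)

lemma qm_minv:
  assumes "i * i = -1"
  shows "minv (qm i x y) = (if x \<or> y then - qm i x y else qm i x y)"
  by (rule minv_unique; cases x; cases y) (simp_all add: assms qm_def mk_mult mk_neg mk_eq mat1_mk)

lemma mul_neg_r: "(A::'a::field mat2) ** (- B) = - (A ** B)"
  by (simp add: matrix_matrix_mult_def vec_eq_iff sum_negf)

lemma mul_neg_l: "(- A::'a::field mat2) ** B = - (A ** B)"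
  by (simp add: matrix_matrix_mult_def vec_eq_iff sum_negf)

fun par :: "(4 \<Rightarrow> bool) \<Rightarrow> word4 \<Rightarrow> bool" where
  "par f [] = False"
| "par f (l # w) = (f (fst l) \<noteq> par f w)"

lemma eval_qm:
  assumes "i * i = -1" "\<And>j. g j = qm i (fx j) (fy j)"
  shows "eval_word w g = qm i (par fx w) (par fy w) \<or> eval_word w g = - qm i (par fx w) (par fy w)"
proof (induction w)
  case Nil
  then show ?case by (simp add: qm_def mat1_mk)
next
  case (Cons l w)
  obtain j b where l: "l = (j, b)" by (cases l)
  let ?Q = "qm i (par fx w) (par fy w)"
  have gen: "(if b then g j else minv (g j)) = qm i (fx j) (fy j) \<or>
             (if b then g j else minv (g j)) = - qm i (fx j) (fy j)"
    using qm_minv[OF assms(1)] assms(2) by auto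
  have ev: "eval_word (l # w) g = (if b then g j else minv (g j)) ** eval_word w g"
    using l by (cases b) auto
  have "\<And>s t. s = qm i (fx j) (fy j) \<or> s = - qm i (fx j) (fy j) \<Longrightarrow>
      t = ?Q \<or> t = - ?Q \<Longrightarrow>
      s ** t = qm i (fx j \<noteq> par fx w) (fy j \<noteq> par fy w) \<or>
      s ** t = - qm i (fx j \<noteq> par fx w) (fy j \<noteq> par fy w)"
    using qm_mult[OF assms(1), of "fx j" "fy j" "par fx w" "par fy w"]
    by (auto simp: mul_neg_r mul_neg_l)
  then show ?case using gen Cons.IH ev l by simp
qed

lemma ex4: "(j::4) = 0 \<or> j = 1 \<or> j = 2 \<or> j = 3"
  using exhaust_4[of j] by auto

definition sel :: "bool \<Rightarrow> bool \<Rightarrow> bool \<Rightarrow> bool \<Rightarrow> 4 \<Rightarrow> bool" where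
  "sel a0 a1 a2 a3 k = (if k = 0 then a0 else if k = 1 then a1 else if k = 2 then a2 else a3)"

lemma par_decomp:
  "par (sel a0 a1 a2 a3) w = ((((a0 \<and> par (\<lambda>k. k = 0) w) \<noteq> (a1 \<and> par (\<lambda>k. k = 1) w)) \<noteq>
      (a2 \<and> par (\<lambda>k. k = 2) w)) \<noteq> (a3 \<and> par (\<lambda>k. k = 3) w))"
proof (induction w)
  case Nil
  then show ?case by simp
next
  case (Cons l w)
  have "fst l = 0 \<or> fst l = 1 \<or> fst l = 2 \<or> fst l = 3" by (rule ex4)
  then show ?case 
  proof (elim disjE)
    assume "fst l = 0" then show ?thesis using Cons by (simp add: sel_def) blast
  next
    assume "fst l = 1" then show ?thesis using Cons by (simp add: sel_def) blast
  next
    assume "fst l = 2" then show ?thesis using Cons by (simp add: sel_def) blast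
  next
    assume "fst l = 3" then show ?thesis using Cons by (simp add: sel_def) blast
  qed
qed

lemma S_mem1:
  assumes ii: "i * i = -1"
  shows "(qm i True False, qm i False True, qm i x y, qm i False False) \<in> S_set"
proof -
  have "qm i True False ** qm i False True ** minv (qm i True False) ** minv (qm i False True)
        ** qm i x y ** qm i False False ** minv (qm i x y) ** minv (qm i False False) = - mat 1"
    unfolding qm_minv[OF ii] by (cases x; cases y) (simp_all add: ii qm_def mk_mult mk_neg mat1_mk mk_eq)
  moreover have "det (qm i x y) = 1" by (cases x; cases y) (simp_all add: ii det_2 qm_def)
  ultimately show ?thesis by (simp add: S_set_def SL2_def is_diagonal2_def ii det_2 qm_def)
qed

lemma S_mem2:
  assumes ii: "i * i = -1"
  shows "(qm i True False, qm i False True, qm i False False, qm i x y) \<in> S_set"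
proof -
  have "qm i True False ** qm i False True ** minv (qm i True False) ** minv (qm i False True)
        ** qm i False False ** qm i x y ** minv (qm i False False) ** minv (qm i x y) = - mat 1"
    unfolding qm_minv[OF ii] by (cases x; cases y) (simp_all add: ii qm_def mk_mult mk_neg mat1_mk mk_eq)
  moreover have "det (qm i x y) = 1" by (cases x; cases y) (simp_all add: ii det_2 qm_def)
  ultimately show ?thesis by (simp add: S_set_def SL2_def is_diagonal2_def ii det_2 qm_def)
qed

lemma S_mem3:
  assumes ii: "i * i = -1"
  shows "(qm i False False, qm i False False, qm i True False, qm i False True) \<in> S_set"
proof -
  have "qm i False False ** qm i False False ** minv (qm i False False) ** minv (qm i False False)
        ** qm i True False ** qm i False True ** minv (qm i True False) ** minv (qm i False True) = - mat 1"
    unfolding qm_minv[OF ii] by (simp add: ii qm_def mk_mult mk_neg mat1_mk mk_eq)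
  then show ?thesis by (simp add: S_set_def SL2_def is_diagonal2_def ii det_2 qm_def)
qed

lemma main_gen:
  assumes ii: "i * i = -1" and g: "\<And>j. gens4 A B C D j = qm i (fx j) (fy j)"
    and n1: "\<not> par fx w" and n2: "\<not> par fy w"
  shows "\<not> psl_order2 (eval_word w (gens4 A B C D))"
proof -
  have q: "qm i False False = mat 1" by (simp add: qm_def mat1_mk)
  have "eval_word w (gens4 A B C D) = qm i (par fx w) (par fy w) \<or>
        eval_word w (gens4 A B C D) = - qm i (par fx w) (par fy w)"
    by (rule eval_qm[where i=i and g="gens4 A B C D" and fx=fx and fy=fy and w=w, OF ii g])
  then have "eval_word w (gens4 A B C D) = mat 1 \<or> eval_word w (gens4 A B C D) = - mat 1"
  proof -
    have pf: "par fx w = False" "par fy w = False" using n1 n2 by simp_all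
    show ?thesis using \<open>_ \<or> _\<close> unfolding pf q by (rule disjE) simp_all
  qed
  then have "psl_proj (eval_word w (gens4 A B C D)) = psl_proj (mat 1)"
  proof
    assume h: "eval_word w (gens4 A B C D) = - mat 1"
    show ?thesis unfolding psl_proj_def h minus_minus by (rule insert_commute)
  qed (simp add: psl_proj_def)
  then show ?thesis unfolding psl_order2_def by blast
qed

theorem lemma4p3:
  fixes v :: "'k::field \<Rightarrow> int" and emb :: "'k \<Rightarrow> 'l::field" and i :: 'l
  assumes "na_local_field v"
    and "(2::'k) \<noteq> 0"
    and "is_K_adjoin_i emb i"
  shows "\<forall>w :: word4. \<exists>A B C D :: 'l mat2. (A, B, C, D) \<in> S_set \<and>
           \<not> psl_order2 (eval_word w (gens4 A B C D))"
proof
  fix w :: word4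
  have ii: "i * i = -1" using assms(3) unfolding is_K_adjoin_i_def by (simp add: power2_eq_square)
  let ?p = "\<lambda>j. par (\<lambda>k. k = j) w"
  have g: "\<And>a0 a1 a2 a3 b0 b1 b2 b3 j. gens4 (qm i a0 b0) (qm i a1 b1) (qm i a2 b2) (qm i a3 b3) j
     = qm i (sel a0 a1 a2 a3 j) (sel b0 b1 b2 b3 j)"
    by (simp add: gens4_def sel_def)
  show "\<exists>A B C D :: 'l mat2. (A, B, C, D) \<in> S_set \<and>
           \<not> psl_order2 (eval_word w (gens4 A B C D))"
  proof (cases "?p 2")
    case True
    show ?thesis
      apply (rule exI[of _ "qm i True False"], rule exI[of _ "qm i False True"],
             rule exI[of _ "qm i (?p 0) (?p 1)"], rule exI[of _ "qm i False False"])
      apply (rule conjI, rule S_mem1[OF ii])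
      apply (rule main_gen[OF ii g])
      using True by (simp_all add: par_decomp)
  next
    case F2: False
    show ?thesis
    proof (cases "?p 3")
      case True
      show ?thesis
        apply (rule exI[of _ "qm i True False"], rule exI[of _ "qm i False True"],
               rule exI[of _ "qm i False False"], rule exI[of _ "qm i (?p 0) (?p 1)"])
        apply (rule conjI, rule S_mem2[OF ii])
        apply (rule main_gen[OF ii g])
        using True F2 by (simp_all add: par_decomp)
    next
      case False
      show ?thesis
        apply (rule exI[of _ "qm i False False"], rule exI[of _ "qm i False False"],
               rule exI[of _ "qm i True False"], rule exI[of _ "qm i False True"])
        apply (rule conjI, rule S_mem3[OF ii])
        apply (rule main_gen[OF ii g])
        using False F2 by (simp_all add: par_decomp)
    qed
  qed
qed

end
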